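(* Let $g = 9.8$ and for $d \ge -\frac{(0.48g)^2}{0.8g}$ let $U(d) = 0.48g - \sqrt{(0.48g)^2 + 0.8 g d}$, so that for $d_0\ge 0$, $U'(d_0) = -\frac{0.4g}{\sqrt{(0.48g)^2+0.8gd_0}}$. Fix $\epsilon > 0$ and $d_0 \ge 0$. Define the surrogate red constraints on a pair $(d,v)\in\mathbb{R}^2$ by $$ v \le -\epsilon, \qquad v \le U'(d_0)(d - d_0) + U(d_0) - \epsilon. $$ Then: (i) (Tightness) every pair $(d,v)\in\mathbb{R}^2$ satisfying both surrogate constraints satisfies the red condition, i.e. $v<0$ and $d \le -1.2v + \frac{v^2}{0.8g}$; equivalently, $F(x) = \text{red}$ for every state $x$ whose driving-direction distance and velocity components are $(d,v)$. (ii) (Convexity) Consider the attack optimization in the context below in which the desired light is red at every step of the attack interval. If, for every $t$ in the attack interval, the constraint $F(\tilde x_t) = \text{red}$ is replaced by the two surrogate constraints applied to $(d,v) = (\tilde d_t^{1}, \tilde v_t^{1})$, the driving-direction distance and velocity components of $\tilde x_t$, then the resulting optimization problem in the variables $\{\delta_t\}_{t\in\mathcal{T}^a}$ is a convex optimization problem.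
   Context: FCW alert logic. For a state $x = (d^1, v^1, a^1, d^2, v^2, a^2)\in\mathbb{R}^6$ (distance, velocity, acceleration of the tracked object in the driving direction, then the same in the lateral direction), with safe distance $d^*(v) = -1.2v + v^2/(0.8g)$, $g=9.8$, the warning light is $F(x)=\text{green}$ if $v^1\ge 0$; $F(x)=\text{yellow}$ if $v^1<0$ and $d^1 > d^*(v^1)$; $F(x)=\text{red}$ if $v^1<0$ and $d^1\le d^*(v^1)$. Attack optimization. Fixed data: a state-transition matrix $A\in\mathbb{R}^{6\times 6}$, a measurement matrix $C\in\mathbb{R}^{8\times 6}$, Kalman gain matrices $H_{t}\in\mathbb{R}^{6\times 8}$ (computed independently of measurements), a finite interval of integer time steps $\mathcal{T}^a = \{t_0, \dots, t_1\}$, a fixed initial prediction $\tilde x_{t_0-1}\in\mathbb{R}^6$, measurements $y_t \in \mathbb{R}^8$ for $t\in\mathcal{T}^a$ (components 1–4 are vision measurements of driving-direction distance, driving-direction velocity, lateral distance, lateral velocity; components 5–8 the same from radar), a positive definite matrix $R\in\mathbb{R}^{8\times 8}$, and a bound $\Delta\in(0,\infty]$. The decision variables are $\delta_t\in\mathbb{R}^8$, $t\in\mathcal{T}^a$. The problem is: minimize $\sum_{t\in\mathcal{T}^a}\delta_t^\top R\delta_t$ subject to, for all $t\in\mathcal{T}^a$: $\tilde y_t = y_t + \delta_t$; $\tilde x_t = A(I - H_{t-1}C)\tilde x_{t-1} + A H_{t-1}\tilde y_t$; $\delta_t^i = 0$ for $i\in\{5,6,7,8\}$; $\|\delta_t\|_\infty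 \le \Delta$; the first component of $\tilde y_t$ lies in $[0,75]$ and the second in $[-30,30]$; and $F(\tilde x_t) = \text{red}$. *)

theory Defs
  imports "HOL-Analysis.Analysis" "HOL-Library.Numeral_Type" "HOL-Library.Extended_Real"
begin

definition g :: real where "g = 9.8"

definition dstar :: "real \<Rightarrow> real" where
  "dstar v = -1.2 * v + v^2 / (0.8 * g)"

datatype light = Green | Yellow | Red

text \<open>States are vectors in real^6; component i (i = 1..6) is x $ i,
  i.e. x $ 1 = d^1, x $ 2 = v^1, x $ 3 = a^1, x $ 4 = d^2, x $ 5 = v^2, x $ 6 = a^2.\<close>
definition F :: "real^6 \<Rightarrow> light" where
  "F x = (if x $ 2 \<ge> 0 then Green
          else if x $ 1 > dstar (x $ 2) then Yellow else Red)"

definition U :: "real \<Rightarrow> real" where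
  "U d = 0.48 * g - sqrt ((0.48 * g)^2 + 0.8 * g * d)"

definition U' :: "real \<Rightarrow> real" where
  "U' d = - (0.4 * g) / sqrt ((0.48 * g)^2 + 0.8 * g * d)"

text \<open>Attacked state estimate: xs n is the prediction at time t0 - 1 + n.\<close>
primrec xs_nat :: "real^6^6 \<Rightarrow> real^6^8 \<Rightarrow> (int \<Rightarrow> real^8^6) \<Rightarrow> real^6 \<Rightarrow> int
                    \<Rightarrow> (int \<Rightarrow> real^8) \<Rightarrow> (int \<Rightarrow> real^8) \<Rightarrow> nat \<Rightarrow> real^6" where
  "xs_nat A C H x0 t0 y \<delta> 0 = x0"
| "xs_nat A C H x0 t0 y \<delta> (Suc n) =
     (A ** (mat 1 - H (t0 - 1 + int n) ** C)) *v xs_nat A C H x0 t0 y \<delta> n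
     + (A ** H (t0 - 1 + int n)) *v (y (t0 + int n) + \<delta> (t0 + int n))"

text \<open>tilde x_t for t \<ge> t0 - 1.\<close>
definition xtil :: "real^6^6 \<Rightarrow> real^6^8 \<Rightarrow> (int \<Rightarrow> real^8^6) \<Rightarrow> real^6 \<Rightarrow> int
                    \<Rightarrow> (int \<Rightarrow> real^8) \<Rightarrow> (int \<Rightarrow> real^8) \<Rightarrow> int \<Rightarrow> real^6" where
  "xtil A C H x0 t0 y \<delta> t = xs_nat A C H x0 t0 y \<delta> (nat (t - t0 + 1))"

definition cost :: "real^8^8 \<Rightarrow> int \<Rightarrow> int \<Rightarrow> (int \<Rightarrow> real^8) \<Rightarrow> real" where
  "cost R t0 t1 \<delta> = (\<Sum>t\<in>{t0..t1}. \<delta> t \<bullet> (R *v \<delta> t))"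

text \<open>Decision variables are delta_t, t in {t0..t1}; we represent
  them as a function on int that vanishes outside {t0..t1}.\<close>
definition surrogate_feasible ::
  "real^6^6 \<Rightarrow> real^6^8 \<Rightarrow> (int \<Rightarrow> real^8^6) \<Rightarrow> real^6 \<Rightarrow> int \<Rightarrow> int
    \<Rightarrow> (int \<Rightarrow> real^8) \<Rightarrow> ereal \<Rightarrow> real \<Rightarrow> real \<Rightarrow> (int \<Rightarrow> real^8) set" where
  "surrogate_feasible A C H x0 t0 t1 y \<Delta> \<epsilon> d0 =
     {\<delta>. (\<forall>t. t \<notin> {t0..t1} \<longrightarrow> \<delta> t = 0) \<and>
          (\<forall>t\<in>{t0..t1}.
             (\<forall>i\<in>{5,6,7,8::8}. \<delta> t $ i = 0) \<and>
             ereal (infnorm (\<delta> t)) \<le> \<Delta> \<and>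
             0 \<le> (y t + \<delta> t) $ 1 \<and> (y t + \<delta> t) $ 1 \<le> 75 \<and>
             -30 \<le> (y t + \<delta> t) $ 2 \<and> (y t + \<delta> t) $ 2 \<le> 30 \<and>
             (xtil A C H x0 t0 y \<delta> t) $ 2 \<le> - \<epsilon> \<and>
             (xtil A C H x0 t0 y \<delta> t) $ 2
                \<le> U' d0 * ((xtil A C H x0 t0 y \<delta> t) $ 1 - d0) + U d0 - \<epsilon>)}"

text \<open>Convexity notions for sets/functions of decision families (int => real^8),
  written out literally as in the definitions of convex and convex_on (the
  function space carries no real_vector instance in the library).\<close>
definition fam_comb :: "real \<Rightarrow> (int \<Rightarrow> real^8) \<Rightarrow> (int \<Rightarrow> real^8) \<Rightarrow> (int \<Rightarrow> real^8)" where
  "fam_comb u \<delta> \<delta>' = (\<lambda>t. u *\<^sub>R \<delta> t + (1 - u) *\<^sub>R \<delta>' t)"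

definition convex_fam :: "(int \<Rightarrow> real^8) set \<Rightarrow> bool" where
  "convex_fam S \<longleftrightarrow> (\<forall>\<delta>\<in>S. \<forall>\<delta>'\<in>S. \<forall>u::real. 0 \<le> u \<and> u \<le> 1 \<longrightarrow> fam_comb u \<delta> \<delta>' \<in> S)"

definition convex_on_fam :: "(int \<Rightarrow> real^8) set \<Rightarrow> ((int \<Rightarrow> real^8) \<Rightarrow> real) \<Rightarrow> bool" where
  "convex_on_fam S J \<longleftrightarrow> convex_fam S \<and>
     (\<forall>\<delta>\<in>S. \<forall>\<delta>'\<in>S. \<forall>u::real. 0 \<le> u \<and> u \<le> 1 \<longrightarrow>
        J (fam_comb u \<delta> \<delta>') \<le> u * J \<delta> + (1 - u) * J \<delta>')"

definition convex_problem :: "((int \<Rightarrow> real^8) \<Rightarrow> real) \<Rightarrow> (int \<Rightarrow> real^8) set \<Rightarrow> bool" where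
  "convex_problem J S \<longleftrightarrow> convex_on_fam UNIV J \<and> convex_fam S"

end

theory Submission
  imports Defs
begin

lemma xs_nat_comb:
  "xs_nat A C H x0 t0 y (fam_comb u \<delta> \<delta>') n =
   u *\<^sub>R xs_nat A C H x0 t0 y \<delta> n + (1 - u) *\<^sub>R xs_nat A C H x0 t0 y \<delta>' n"
proof (induction n)
  case 0
  then show ?case by (simp add: scaleR_left_diff_distrib)
next
  case (Suc n)
  show ?case
    apply (simp only: xs_nat.simps Suc)
    apply (simp add: fam_comb_def matrix_vector_right_distrib matrix_vector_mult_scaleR algebra_simps)
    done
qed

lemma xtil_comb:
  "xtil A C H x0 t0 y (fam_comb u \<delta> \<delta>') t =
   u *\<^sub>R xtil A C H x0 t0 y \<delta> t + (1 - u) *\<^sub>R xtil A C H x0 t0 y \<delta>' t"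
  unfolding xtil_def by (rule xs_nat_comb)

lemma R_symm_inner:
  fixes R :: "real^8^8"
  assumes "transpose R = R"
  shows "z \<bullet> (R *v w) = w \<bullet> (R *v z)"
proof -
  have "z \<bullet> (R *v w) = (z v* R) \<bullet> w" by (simp add: dot_lmul_matrix)
  also have "z v* R = transpose R *v z"
    by (simp add: transpose_matrix_vector)
  finally show ?thesis using assms by (simp add: inner_commute)
qed

lemma quad_convex:
  fixes R :: "real^8^8"
  assumes sym: "transpose R = R" and psd: "\<And>z. z \<bullet> (R *v z) \<ge> 0"
    and u: "0 \<le> u" "u \<le> 1"
  shows "(u *\<^sub>R z + (1 - u) *\<^sub>R w) \<bullet> (R *v (u *\<^sub>R z + (1 - u) *\<^sub>R w))
         \<le> u * (z \<bullet> (R *v z)) + (1 - u) * (w \<bullet> (R *v w))"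
proof -
  have s: "w \<bullet> (R *v z) = z \<bullet> (R *v w)" using R_symm_inner[OF sym] by simp
  have e1: "(u *\<^sub>R z + (1 - u) *\<^sub>R w) \<bullet> (R *v (u *\<^sub>R z + (1 - u) *\<^sub>R w))
     = u*u * (z \<bullet> (R *v z)) + 2*u*(1-u) * (z \<bullet> (R *v w)) + (1-u)*(1-u) * (w \<bullet> (R *v w))"
    by (simp add: matrix_vector_right_distrib matrix_vector_mult_scaleR inner_add_left
        inner_add_right s algebra_simps)
  have e2: "(z - w) \<bullet> (R *v (z - w)) = z \<bullet> (R *v z) - 2 * (z \<bullet> (R *v w)) + w \<bullet> (R *v w)"
    by (simp add: matrix_vector_right_distrib inner_diff_left inner_diff_right s algebra_simps)
  have "0 \<le> u * (1 - u) * ((z - w) \<bullet> (R *v (z - w)))"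
    using psd[of "z - w"] u by simp
  then show ?thesis unfolding e1 using e2 by (simp add: algebra_simps)
qed

lemma part1:
  fixes \<epsilon> d0 d v :: real
  assumes eps: "\<epsilon> > 0" and d0: "d0 \<ge> 0"
    and h1: "v \<le> - \<epsilon>" and h2: "v \<le> U' d0 * (d - d0) + U d0 - \<epsilon>"
  shows "v < 0 \<and> d \<le> -1.2 * v + v^2 / (0.8 * g)"
proof -
  define a :: real where "a = 0.48 * g"
  define b :: real where "b = 0.8 * g"
  define s where "s = sqrt (a^2 + b * d0)"
  have b: "b > 0" by (simp add: b_def g_def)
  have a: "a > 0" by (simp add: a_def g_def)
  have s2: "s^2 = a^2 + b*d0" unfolding s_def using b d0 a
    by (simp add: add_nonneg_nonneg)
  have sp: "s > 0" unfolding s_def using a b d0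
    by (simp add: add_pos_nonneg)
  have U'e: "U' d0 = - (b/2) / s" unfolding U'_def s_def a_def b_def by simp
  have Ue: "U d0 = a - s" unfolding U_def s_def a_def b_def by simp
  have h2': "v \<le> - (b/2) / s * (d - d0) + (a - s) - \<epsilon>" using h2 U'e Ue by simp
  then have hsv: "s * v \<le> - (b/2) * (d - d0) + s*(a - s) - s*\<epsilon>"
    using sp by (simp add: field_simps)
  have se: "s * \<epsilon> > 0" using sp eps by simp
  have h3: "b * d \<le> b * d0 - 2 * s * (v - a + s)"
  proof -
    have e1: "-(b/2)*(d-d0) = -(b*d)/2 + (b*d0)/2" by (simp add: field_simps)
    have e2: "s * (a - s) = s * a - s * s" by (simp add: algebra_simps)
    have e3: "2 * s * (v - a + s) = 2 * (s * v) - 2 * (s * a) + 2 * (s * s)" by (simp add: algebra_simps)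
    show ?thesis using hsv se e1 e2 e3 by argo
  qed
  have sq: "0 \<le> (v + s - a)^2" by simp
  have "b * d \<le> v^2 - 2 * a * v" using h3 s2 sq by (simp add: power2_eq_square algebra_simps)
  then have "d \<le> (v^2 - 2 * a * v) / b" using b by (simp add: field_simps)
  moreover have "(v^2 - 2 * a * v) / b = -1.2 * v + v^2 / (0.8 * g)"
    unfolding a_def b_def by (simp add: g_def field_simps)
  ultimately show ?thesis using h1 eps by simp
qed

lemma cc_le:
  fixes p q c u :: real
  assumes "p \<le> c" "q \<le> c" "0 \<le> u" "u \<le> 1"
  shows "u * p + (1 - u) * q \<le> c"
proof -
  have "u * p \<le> u * c" using assms by (simp add: mult_left_mono)
  moreover have "(1 - u) * q \<le> (1 - u) * c" using assms by (simp add: mult_left_mono)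
  ultimately show ?thesis by (simp add: algebra_simps)
qed

lemma cc_ge:
  fixes p q c u :: real
  assumes "c \<le> p" "c \<le> q" "0 \<le> u" "u \<le> 1"
  shows "c \<le> u * p + (1 - u) * q"
  using cc_le[of "-p" "-c" "-q" u] assms by (simp add: algebra_simps)

lemma infnorm_cc:
  fixes a b :: "real^8"
  assumes "0 \<le> u" "u \<le> 1"
  shows "infnorm (u *\<^sub>R a + (1 - u) *\<^sub>R b) \<le> u * infnorm a + (1 - u) * infnorm b"
proof -
  have "infnorm (u *\<^sub>R a + (1 - u) *\<^sub>R b) \<le> infnorm (u *\<^sub>R a) + infnorm ((1 - u) *\<^sub>R b)"
    by (rule infnorm_triangle)
  also have "\<dots> = u * infnorm a + (1 - u) * infnorm b"
    using assms by (simp add: infnorm_mul)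
  finally show ?thesis .
qed

lemma ereal_cc:
  fixes p q u :: real and D :: ereal
  assumes "ereal p \<le> D" "ereal q \<le> D" "0 \<le> u" "u \<le> 1" "r \<le> u * p + (1 - u) * q"
  shows "ereal r \<le> D"
proof (cases D)
  case (real x)
  then have "r \<le> x" using cc_le[of p x q u] assms by simp
  then show ?thesis using real by simp
next
  case PInf
  then show ?thesis by simp
next
  case MInf
  then show ?thesis using assms by simp
qed

theorem proposition1:
  fixes \<epsilon> d0 :: real
    and A :: "real^6^6" and C :: "real^6^8" and H :: "int \<Rightarrow> real^8^6"
    and R :: "real^8^8" and x0 :: "real^6" and y :: "int \<Rightarrow> real^8"
    and t0 t1 :: int and \<Delta> :: ereal
  assumes eps: "\<epsilon> > 0" and d0: "d0 \<ge> 0"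
    and interval: "t0 \<le> t1"
    and R_sym: "transpose R = R"
    and R_pos: "\<forall>z::real^8. z \<noteq> 0 \<longrightarrow> z \<bullet> (R *v z) > 0"
    and Delta: "\<Delta> > 0"
  shows "(\<forall>d v. v \<le> - \<epsilon> \<and> v \<le> U' d0 * (d - d0) + U d0 - \<epsilon> \<longrightarrow>
            (v < 0 \<and> d \<le> -1.2 * v + v^2 / (0.8 * g)) \<and>
            (\<forall>x::real^6. x $ 1 = d \<and> x $ 2 = v \<longrightarrow> F x = Red))
       \<and> convex_problem (cost R t0 t1) (surrogate_feasible A C H x0 t0 t1 y \<Delta> \<epsilon> d0)"
proof (rule conjI)
  show "\<forall>d v. v \<le> - \<epsilon> \<and> v \<le> U' d0 * (d - d0) + U d0 - \<epsilon> \<longrightarrow>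
            (v < 0 \<and> d \<le> -1.2 * v + v^2 / (0.8 * g)) \<and>
            (\<forall>x::real^6. x $ 1 = d \<and> x $ 2 = v \<longrightarrow> F x = Red)"
  proof (intro allI impI)
    fix d v :: real
    assume h: "v \<le> - \<epsilon> \<and> v \<le> U' d0 * (d - d0) + U d0 - \<epsilon>"
    have P: "v < 0 \<and> d \<le> -1.2 * v + v^2 / (0.8 * g)" using part1[OF eps d0] h by blast
    moreover have "\<forall>x::real^6. x $ 1 = d \<and> x $ 2 = v \<longrightarrow> F x = Red"
      using P by (auto simp add: F_def dstar_def)
    ultimately show "(v < 0 \<and> d \<le> -1.2 * v + v^2 / (0.8 * g)) \<and>
            (\<forall>x::real^6. x $ 1 = d \<and> x $ 2 = v \<longrightarrow> F x = Red)" by blast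
  qed
next
  have psd: "\<And>z. z \<bullet> (R *v z) \<ge> 0"
  proof -
    fix z :: "real^8"
    show "z \<bullet> (R *v z) \<ge> 0" using R_pos by (cases "z = 0") (auto intro: less_imp_le)
  qed
  have cvxJ: "convex_on_fam UNIV (cost R t0 t1)"
    unfolding convex_on_fam_def convex_fam_def
  proof (intro conjI ballI allI impI)
    fix \<delta> \<delta>' :: "int \<Rightarrow> real^8" and u :: real
    assume u: "0 \<le> u \<and> u \<le> 1"
    have "cost R t0 t1 (fam_comb u \<delta> \<delta>') \<le>
       (\<Sum>t\<in>{t0..t1}. u * (\<delta> t \<bullet> (R *v \<delta> t)) + (1 - u) * (\<delta>' t \<bullet> (R *v \<delta>' t)))"
      unfolding cost_def fam_comb_def
      by (rule sum_mono) (use quad_convex[OF R_sym psd] u in auto)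
    also have "\<dots> = u * cost R t0 t1 \<delta> + (1 - u) * cost R t0 t1 \<delta>'"
      unfolding cost_def by (simp add: sum.distrib sum_distrib_left)
    finally show "cost R t0 t1 (fam_comb u \<delta> \<delta>') \<le> u * cost R t0 t1 \<delta> + (1 - u) * cost R t0 t1 \<delta>'" .
  qed auto
  have cvxS: "convex_fam (surrogate_feasible A C H x0 t0 t1 y \<Delta> \<epsilon> d0)"
    unfolding convex_fam_def
  proof (intro ballI allI impI)
    fix \<delta> \<delta>' :: "int \<Rightarrow> real^8" and u :: real
    assume S1: "\<delta> \<in> surrogate_feasible A C H x0 t0 t1 y \<Delta> \<epsilon> d0"
      and S2: "\<delta>' \<in> surrogate_feasible A C H x0 t0 t1 y \<Delta> \<epsilon> d0"
      and u: "0 \<le> u \<and> u \<le> 1"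
    show "fam_comb u \<delta> \<delta>' \<in> surrogate_feasible A C H x0 t0 t1 y \<Delta> \<epsilon> d0"
      unfolding surrogate_feasible_def mem_Collect_eq
    proof (intro conjI allI impI ballI)
      fix t assume "t \<notin> {t0..t1}"
      then show "fam_comb u \<delta> \<delta>' t = 0" using S1 S2
        by (simp add: surrogate_feasible_def fam_comb_def)
    next
      fix t assume t: "t \<in> {t0..t1}"
      let ?X = "xtil A C H x0 t0 y \<delta> t"
      let ?X' = "xtil A C H x0 t0 y \<delta>' t"
      let ?Z = "xtil A C H x0 t0 y (fam_comb u \<delta> \<delta>') t"
      have P1: "(\<forall>i\<in>{5,6,7,8::8}. \<delta> t $ i = 0) \<and>
             ereal (infnorm (\<delta> t)) \<le> \<Delta> \<and>
             0 \<le> (y t + \<delta> t) $ 1 \<and> (y t + \<delta> t) $ 1 \<le> 75 \<and>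
             -30 \<le> (y t + \<delta> t) $ 2 \<and> (y t + \<delta> t) $ 2 \<le> 30 \<and>
             ?X $ 2 \<le> - \<epsilon> \<and>
             ?X $ 2 \<le> U' d0 * (?X $ 1 - d0) + U d0 - \<epsilon>"
        using S1 t unfolding surrogate_feasible_def by blast
      have P2: "(\<forall>i\<in>{5,6,7,8::8}. \<delta>' t $ i = 0) \<and>
             ereal (infnorm (\<delta>' t)) \<le> \<Delta> \<and>
             0 \<le> (y t + \<delta>' t) $ 1 \<and> (y t + \<delta>' t) $ 1 \<le> 75 \<and>
             -30 \<le> (y t + \<delta>' t) $ 2 \<and> (y t + \<delta>' t) $ 2 \<le> 30 \<and>
             ?X' $ 2 \<le> - \<epsilon> \<and>
             ?X' $ 2 \<le> U' d0 * (?X' $ 1 - d0) + U d0 - \<epsilon>"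
        using S2 t unfolding surrogate_feasible_def by blast
      have u0: "0 \<le> u" and u1: "u \<le> 1" using u by auto
      have yc: "\<And>i. (y t + fam_comb u \<delta> \<delta>' t) $ i = u * (y t + \<delta> t) $ i + (1 - u) * (y t + \<delta>' t) $ i"
        by (simp add: fam_comb_def algebra_simps)
      have Zc: "\<And>i. ?Z $ i = u * ?X $ i + (1 - u) * ?X' $ i"
        by (simp add: xtil_comb)
      show "fam_comb u \<delta> \<delta>' t $ i = 0" if "i \<in> {5,6,7,8::8}" for i
        using P1 P2 that by (auto simp add: fam_comb_def)
      show "ereal (infnorm (fam_comb u \<delta> \<delta>' t)) \<le> \<Delta>"
        using ereal_cc[OF _ _ u0 u1 infnorm_cc[OF u0 u1]] P1 P2 unfolding fam_comb_def by blast
      show "0 \<le> (y t + fam_comb u \<delta> \<delta>' t) $ 1"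
        unfolding yc using cc_ge[OF _ _ u0 u1] P1 P2 by blast
      show "(y t + fam_comb u \<delta> \<delta>' t) $ 1 \<le> 75"
        unfolding yc using cc_le[OF _ _ u0 u1] P1 P2 by blast
      show "-30 \<le> (y t + fam_comb u \<delta> \<delta>' t) $ 2"
        unfolding yc using cc_ge[OF _ _ u0 u1] P1 P2 by blast
      show "(y t + fam_comb u \<delta> \<delta>' t) $ 2 \<le> 30"
        unfolding yc using cc_le[OF _ _ u0 u1] P1 P2 by blast
      show "?Z $ 2 \<le> - \<epsilon>"
        unfolding Zc using cc_le[OF _ _ u0 u1] P1 P2 by blast
      define m where "m = U' d0"
      define K where "K = - m * d0 + U d0 - \<epsilon>"
      have L1: "?X $ 2 - m * ?X $ 1 \<le> K" using P1 unfolding m_def K_def by (simp add: algebra_simps)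
      have L2: "?X' $ 2 - m * ?X' $ 1 \<le> K" using P2 unfolding m_def K_def by (simp add: algebra_simps)
      have "u * (?X $ 2 - m * ?X $ 1) + (1 - u) * (?X' $ 2 - m * ?X' $ 1) \<le> K"
        using cc_le[OF L1 L2 u0 u1] .
      then have "?Z $ 2 - m * ?Z $ 1 \<le> K" unfolding Zc by (simp add: algebra_simps)
      then show "?Z $ 2 \<le> U' d0 * (?Z $ 1 - d0) + U d0 - \<epsilon>"
        unfolding m_def K_def by (simp add: algebra_simps)
    qed
  qed
  show "convex_problem (cost R t0 t1) (surrogate_feasible A C H x0 t0 t1 y \<Delta> \<epsilon> d0)"
    unfolding convex_problem_def using cvxJ cvxS by blast
qed

end
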